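(* Let $u\in U$ and let $\Phi$ be a continuous Young function satisfying the $\Delta_2$ condition. Then: (1) for all $f\in wL_\Phi^u(\mathbb{R}^n)$ and all $x\in\mathbb{R}^n$, we have $L_xf\in wL_\Phi^u(\mathbb{R}^n)$ and $\|L_xf\|_{wL_\Phi^u(\mathbb{R}^n)} \le u(x)\|f\|_{wL_\Phi^u(\mathbb{R}^n)}$; (2) if $f\in wL_\Phi^u(\mathbb{R}^n)$ and $f\neq 0$, then there is a constant $C>0$ (depending on $f$) such that $\frac{u(x)}{C} \le \|L_xf\|_{wL_\Phi^u(\mathbb{R}^n)} \le C u(x)$ for all $x \in \mathbb{R}^n$.
   Context: $U$ denotes the set of all functions $u:\mathbb{R}^n\to(0,\infty)$ such that $u(x+y)\le u(x)u(y)$ for all $x,y\in\mathbb{R}^n$. A Young function is a function $\Phi:[0,\infty)\to[0,\infty)$ that is convex, left-continuous, satisfies $\lim_{t\to0}\Phi(t)=0=\Phi(0)$ and $\lim_{t\to\infty}\Phi(t)=\infty$. $\Phi$ satisfies the $\Delta_2$ condition if there is $K>0$ with $\Phi(2t)\le K\Phi(t)$ for all $t\ge0$. For a Young function $\Phi$ and a weight $u:\mathbb{R}^n\to(0,\infty)$, the weighted weak Orlicz space $wL_\Phi^u(\mathbb{R}^n)$ is the set of measurable $f:\mathbb{R}^n\to\mathbb{R}$ with $\|f\|_{wL_\Phi^u(\mathbb{R}^n)} := \inf\{ b>0 : \sup_{t>0} \Phi(t)\,|\{x\in\mathbb{R}^n : |u(x)f(x)|/b > t\}| \le 1\} < \infty$,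 where $|\cdot|$ is Lebesgue measure. For $x\in\mathbb{R}^n$, the translation $L_xf$ is defined by $L_xf(y):=f(y-x)$. *)

theory Defs
  imports "HOL-Analysis.Analysis"
begin

definition submult_weights :: "('a::euclidean_space \<Rightarrow> real) set" where
  "submult_weights = {u. (\<forall>x. 0 < u x) \<and> (\<forall>x y. u (x + y) \<le> u x * u y)}"

text \<open>Young functions (only the values on [0,\<infinity>) matter).\<close>
definition young_function :: "(real \<Rightarrow> real) \<Rightarrow> bool" where
  "young_function \<Phi> \<longleftrightarrow>
     (\<forall>t\<ge>0. 0 \<le> \<Phi> t) \<and>
     convex_on {0..} \<Phi> \<and>
     (\<forall>t>0. (\<Phi> \<longlongrightarrow> \<Phi> t) (at_left t)) \<and>
     \<Phi> 0 = 0 \<and> (\<Phi> \<longlongrightarrow> 0) (at_right 0) \<and>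
     filterlim \<Phi> at_top at_top"

definition delta2 :: "(real \<Rightarrow> real) \<Rightarrow> bool" where
  "delta2 \<Phi> \<longleftrightarrow> (\<exists>K>0. \<forall>t\<ge>0. \<Phi> (2 * t) \<le> K * \<Phi> t)"

definition leb_outer :: "'a::euclidean_space set \<Rightarrow> ennreal" where
  "leb_outer A = (INF B \<in> {B \<in> sets lebesgue. A \<subseteq> B}. emeasure lebesgue B)"

definition wOrlicz_admissible ::
  "(real \<Rightarrow> real) \<Rightarrow> ('a::euclidean_space \<Rightarrow> real) \<Rightarrow> ('a \<Rightarrow> real) \<Rightarrow> real \<Rightarrow> bool" where
  "wOrlicz_admissible \<Phi> u f b \<longleftrightarrow>
     0 < b \<and> (\<forall>t>0. ennreal (\<Phi> t) * leb_outer {x. \<bar>u x * f x\<bar> / b > t} \<le> 1)"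

definition wOrlicz_norm ::
  "(real \<Rightarrow> real) \<Rightarrow> ('a::euclidean_space \<Rightarrow> real) \<Rightarrow> ('a \<Rightarrow> real) \<Rightarrow> real" where
  "wOrlicz_norm \<Phi> u f = Inf {b. wOrlicz_admissible \<Phi> u f b}"

definition wOrlicz_space ::
  "(real \<Rightarrow> real) \<Rightarrow> ('a::euclidean_space \<Rightarrow> real) \<Rightarrow> ('a \<Rightarrow> real) set" where
  "wOrlicz_space \<Phi> u = {f. f \<in> borel_measurable lebesgue \<and> (\<exists>b. wOrlicz_admissible \<Phi> u f b)}"

definition transl :: "'a::euclidean_space \<Rightarrow> ('a \<Rightarrow> real) \<Rightarrow> ('a \<Rightarrow> real)" where
  "transl x f = (\<lambda>y. f (y - x))"

end

theory Submission
  imports Defs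
begin

lemma transl_meas:
  fixes x :: "'a::euclidean_space"
  shows "(\<lambda>y. y - x) \<in> lebesgue \<rightarrow>\<^sub>M lebesgue"
  using lebesgue_affine_measurable[of "\<lambda>_. 1" "-x"]
  by (simp add: euclidean_representation)

lemma leb_outer_mono: "A \<subseteq> B \<Longrightarrow> leb_outer A \<le> leb_outer B"
  unfolding leb_outer_def by (rule INF_superset_mono) auto

lemma leb_outer_transl_le:
  fixes x :: "'a::euclidean_space"
  shows "leb_outer ((+) x ` A) \<le> leb_outer A"
  unfolding leb_outer_def
proof (rule INF_greatest)
  fix B assume B: "B \<in> {B \<in> sets lebesgue. A \<subseteq> B}"
  have "(+) x ` B \<in> {B' \<in> sets lebesgue. (+) x ` A \<subseteq> B'}"
    using B lebesgue_sets_translation[of B x] by auto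
  hence "(INF B'\<in>{B' \<in> sets lebesgue. (+) x ` A \<subseteq> B'}. emeasure lebesgue B') \<le> emeasure lebesgue ((+) x ` B)"
    by (rule INF_lower)
  also have "emeasure lebesgue ((+) x ` B) = emeasure lebesgue B"
    using emeasure_lebesgue_affine[of 1 x B] by (simp add: add.commute cong: image_cong_simp)
  finally show "(INF B'\<in>{B' \<in> sets lebesgue. (+) x ` A \<subseteq> B'}. emeasure lebesgue B') \<le> emeasure lebesgue B" .
qed

lemma leb_outer_transl:
  fixes x :: "'a::euclidean_space"
  shows "leb_outer ((+) x ` A) = leb_outer A"
proof (rule antisym[OF leb_outer_transl_le])
  have "A = (+) (-x) ` ((+) x ` A)" by (auto simp: image_image)
  then show "leb_outer A \<le> leb_outer ((+) x ` A)"
    by (metis leb_outer_transl_le)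
qed

lemma leb_outer_zero_negligible:
  fixes A :: "'a::euclidean_space set"
  assumes "leb_outer A = 0" shows "negligible A"
  unfolding negligible_outer
proof (intro allI impI)
  fix e :: real assume e: "e > 0"
  have "(INF B\<in>{B \<in> sets lebesgue. A \<subseteq> B}. emeasure lebesgue B) < ennreal e"
    using assms e by (simp add: leb_outer_def)
  then obtain B where B: "B \<in> sets lebesgue" "A \<subseteq> B" "emeasure lebesgue B < ennreal e"
    by (auto simp: INF_less_iff)
  have "emeasure lebesgue B < top" by (rule order.strict_trans[OF B(3) ennreal_less_top])
  then have "B \<in> lmeasurable" using B(1) by (simp add: fmeasurable_def)
  moreover have "measure lebesgue B < e"
  proof -
    have "ennreal (measure lebesgue B) < ennreal e"
      using B(3) emeasure_eq_ennreal_measure[of lebesgue B] \<open>emeasure lebesgue B < top\<close> by simp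
    then show ?thesis using e by (simp add: ennreal_less_iff)
  qed
  ultimately show "\<exists>T. A \<subseteq> T \<and> T \<in> lmeasurable \<and> measure lebesgue T < e" using B by blast
qed

lemma adm_transl:
  fixes u :: "'a::euclidean_space \<Rightarrow> real"
  assumes u: "u \<in> submult_weights" and adm: "wOrlicz_admissible \<Phi> u f b"
  shows "wOrlicz_admissible \<Phi> u (transl x f) (u x * b)"
proof -
  have upos: "\<And>z. 0 < u z" and usub: "\<And>z w. u (z + w) \<le> u z * u w"
    using u by (auto simp: submult_weights_def)
  have b: "0 < b" using adm by (simp add: wOrlicz_admissible_def)
  have "ennreal (\<Phi> t) * leb_outer {y. \<bar>u y * transl x f y\<bar> / (u x * b) > t} \<le> 1" if t: "t > 0" for t
  proof -
    let ?S2 = "{z. \<bar>u z * f z\<bar> / b > t}"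
    have sub: "{y. \<bar>u y * transl x f y\<bar> / (u x * b) > t} \<subseteq> (+) x ` ?S2"
    proof
      fix y assume "y \<in> {y. \<bar>u y * transl x f y\<bar> / (u x * b) > t}"
      then have h: "\<bar>u y * f (y - x)\<bar> / (u x * b) > t" by (simp add: transl_def)
      have "u y \<le> u x * u (y - x)" using usub[of x "y - x"] by simp
      then have "\<bar>u y * f (y - x)\<bar> \<le> u x * (u (y - x) * \<bar>f (y - x)\<bar>)"
        using upos[of y] mult_right_mono[OF \<open>u y \<le> u x * u (y - x)\<close> abs_ge_zero[of "f (y - x)"]]
        by (simp add: abs_mult mult.assoc)
      then have "\<bar>u y * f (y - x)\<bar> / (u x * b) \<le> u x * (u (y - x) * \<bar>f (y - x)\<bar>) / (u x * b)"
        by (rule divide_right_mono) (use upos[of x] b in auto)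
      also have "\<dots> = \<bar>u (y - x) * f (y - x)\<bar> / b"
        using upos[of x] upos[of "y - x"] by (simp add: abs_mult)
      finally have "y - x \<in> ?S2" using h by simp
      then show "y \<in> (+) x ` ?S2" by (rule rev_image_eqI) simp
    qed
    have "ennreal (\<Phi> t) * leb_outer {y. \<bar>u y * transl x f y\<bar> / (u x * b) > t}
        \<le> ennreal (\<Phi> t) * leb_outer ((+) x ` ?S2)"
      by (rule mult_left_mono[OF leb_outer_mono[OF sub]]) simp
    also have "\<dots> = ennreal (\<Phi> t) * leb_outer ?S2" by (simp add: leb_outer_transl)
    also have "\<dots> \<le> 1" using adm t by (simp add: wOrlicz_admissible_def)
    finally show ?thesis .
  qed
  then show ?thesis using upos[of x] b by (simp add: wOrlicz_admissible_def)
qed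

lemma norm_nonneg_bdd:
  "bdd_below {b. wOrlicz_admissible \<Phi> u f b}"
  by (rule bdd_belowI[of _ 0]) (simp add: wOrlicz_admissible_def)

lemma part1:
  fixes u :: "'a::euclidean_space \<Rightarrow> real"
  assumes u: "u \<in> submult_weights" and f: "f \<in> wOrlicz_space \<Phi> u"
  shows "transl x f \<in> wOrlicz_space \<Phi> u \<and>
         wOrlicz_norm \<Phi> u (transl x f) \<le> u x * wOrlicz_norm \<Phi> u f"
proof -
  have upos: "0 < u x" using u by (auto simp: submult_weights_def)
  have fm: "f \<in> borel_measurable lebesgue" and ex: "\<exists>b. wOrlicz_admissible \<Phi> u f b"
    using f by (auto simp: wOrlicz_space_def)
  then obtain b0 where b0: "wOrlicz_admissible \<Phi> u f b0" by blast
  have "transl x f = f \<circ> (\<lambda>y. y - x)" by (simp add: transl_def o_def)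
  then have tm: "transl x f \<in> borel_measurable lebesgue"
    using measurable_comp[OF transl_meas fm] by simp
  have S: "{b. wOrlicz_admissible \<Phi> u f b} \<noteq> {}" using b0 by blast
  have le: "wOrlicz_norm \<Phi> u (transl x f) \<le> u x * b" if "wOrlicz_admissible \<Phi> u f b" for b
    unfolding wOrlicz_norm_def
    by (rule cInf_lower[OF _ norm_nonneg_bdd]) (use adm_transl[OF u that] in simp)
  have "wOrlicz_norm \<Phi> u (transl x f) / u x \<le> wOrlicz_norm \<Phi> u f"
    unfolding wOrlicz_norm_def[of _ _ f]
  proof (rule cInf_greatest[OF S])
    fix b assume "b \<in> {b. wOrlicz_admissible \<Phi> u f b}"
    then show "wOrlicz_norm \<Phi> u (transl x f) / u x \<le> b"
      using le[of b] upos by (simp add: divide_le_eq mult.commute)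
  qed
  then have "wOrlicz_norm \<Phi> u (transl x f) \<le> u x * wOrlicz_norm \<Phi> u f"
    using upos by (simp add: divide_le_eq mult.commute)
  moreover have "transl x f \<in> wOrlicz_space \<Phi> u"
    using tm adm_transl[OF u b0] by (auto simp: wOrlicz_space_def)
  ultimately show ?thesis by simp
qed

lemma part2:
  fixes u :: "'a::euclidean_space \<Rightarrow> real"
  assumes u: "u \<in> submult_weights" and Y: "young_function \<Phi>"
    and f: "f \<in> wOrlicz_space \<Phi> u" and nz: "\<not> (AE x in lebesgue. f x = 0)"
  shows "\<exists>C>0. \<forall>x. u x / C \<le> wOrlicz_norm \<Phi> u (transl x f) \<and>
                        wOrlicz_norm \<Phi> u (transl x f) \<le> C * u x"
proof -
  have upos: "\<And>z. 0 < u z" and usub: "\<And>z w. u (z + w) \<le> u z * u w"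
    using u by (auto simp: submult_weights_def)
  have fm: "f \<in> borel_measurable lebesgue" using f by (simp add: wOrlicz_space_def)
  define Bn where "Bn n = {z. 1 / real (Suc n) < \<bar>f z\<bar> / u (- z)}" for n
  have "\<exists>n. leb_outer (Bn n) \<noteq> 0"
  proof (rule ccontr)
    assume "\<not> ?thesis"
    then have "\<And>n. negligible (Bn n)" using leb_outer_zero_negligible by blast
    then have neg: "negligible (\<Union>n. Bn n)" by (rule negligible_Union_nat)
    have "{z. f z \<noteq> 0} \<subseteq> (\<Union>n. Bn n)"
    proof
      fix z assume "z \<in> {z. f z \<noteq> 0}"
      then have "0 < \<bar>f z\<bar> / u (- z)" using upos[of "-z"] by simp
      then obtain n where "inverse (real (Suc n)) < \<bar>f z\<bar> / u (- z)"
        using reals_Archimedean by blast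
      then show "z \<in> (\<Union>n. Bn n)" by (auto simp: Bn_def field_simps)
    qed
    then have "AE z in lebesgue. f z = 0"
      using neg by (intro AE_I'[of "\<Union>n. Bn n"]) (auto simp: negligible_iff_null_sets)
    with nz show False by blast
  qed
  then obtain n where mn: "leb_outer (Bn n) \<noteq> 0" by blast
  define m where "m = leb_outer (Bn n)"
  define K where "K = 1 + 1 / enn2real m"
  have "filterlim \<Phi> at_top at_top" using Y by (simp add: young_function_def)
  then have "eventually (\<lambda>t. K \<le> \<Phi> t) at_top" by (simp add: filterlim_at_top)
  then obtain N where N: "\<And>t. t \<ge> N \<Longrightarrow> K \<le> \<Phi> t" by (auto simp: eventually_at_top_linorder)
  define T where "T = max N 1"
  have T: "T > 0" "\<And>t. t \<ge> T \<Longrightarrow> K \<le> \<Phi> t" using N by (auto simp: T_def)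
  have big: "1 < ennreal (\<Phi> t) * m" if "t \<ge> T" for t
  proof -
    have K1: "1 \<le> K" "0 \<le> 1 / enn2real m" by (auto simp: K_def)
    have Pt: "K \<le> \<Phi> t" using T that by blast
    show ?thesis
    proof (cases "m = top")
      case True
      then show ?thesis using Pt K1 by (simp add: ennreal_mult_top)
    next
      case False
      then obtain r where r: "m = ennreal r" "r \<ge> 0" by (cases m) auto
      with mn have rpos: "r > 0" by (auto simp: m_def)
      have "K = 1 + 1 / r" using r by (simp add: K_def)
      then have "\<Phi> t * r \<ge> (1 + 1/r) * r" using Pt rpos by (simp add: mult_right_mono)
      moreover have "(1 + 1/r) * r = r + 1" using rpos by (simp add: field_simps)
      ultimately have "\<Phi> t * r > 1" using rpos by linarith
      moreover have "\<Phi> t \<ge> 0" using Pt K1 by simp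
      ultimately show ?thesis using r rpos by (simp add: ennreal_mult[symmetric])
    qed
  qed
  have lower: "u x / (real (Suc n) * T) \<le> b" if adm: "wOrlicz_admissible \<Phi> u (transl x f) b" for x b
  proof (rule ccontr)
    assume "\<not> ?thesis"
    then have lt: "b < u x / (real (Suc n) * T)" by simp
    have b: "b > 0" using adm by (simp add: wOrlicz_admissible_def)
    define t where "t = u x / (real (Suc n) * b)"
    have tpos: "t > 0" using b upos[of x] by (simp add: t_def)
    have pT: "real (Suc n) * T > 0" using T(1) by simp
    have "b * (real (Suc n) * T) < u x" using lt pT by (simp add: less_divide_eq)
    then have "T * (real (Suc n) * b) < u x" by (simp add: algebra_simps)
    moreover have "real (Suc n) * b > 0" using b by simp
    ultimately have tT: "t \<ge> T" unfolding t_def by (simp add: le_divide_eq)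
    have sub: "(+) x ` Bn n \<subseteq> {y. \<bar>u y * transl x f y\<bar> / b > t}"
    proof
      fix y assume "y \<in> (+) x ` Bn n"
      then obtain z where z: "z \<in> Bn n" "y = x + z" by blast
      have "u x \<le> u y * u (- z)" using usub[of y "-z"] z(2) by simp
      then have h1: "u x / u (- z) \<le> u y" using upos[of "-z"] by (simp add: divide_le_eq)
      have "1 / real (Suc n) < \<bar>f z\<bar> / u (- z)" using z(1) by (simp add: Bn_def)
      then have "u x * (1 / real (Suc n)) < u x * (\<bar>f z\<bar> / u (- z))"
        using upos[of x] by (intro mult_strict_left_mono) auto
      also have "\<dots> = (u x / u (- z)) * \<bar>f z\<bar>" by simp
      also have "\<dots> \<le> u y * \<bar>f z\<bar>" by (rule mult_right_mono[OF h1 abs_ge_zero])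
      also have "\<dots> = \<bar>u y * transl x f y\<bar>" using z(2) upos[of y] by (simp add: transl_def abs_mult)
      finally have "u x / real (Suc n) < \<bar>u y * transl x f y\<bar>" by simp
      then have "(u x / real (Suc n)) / b < \<bar>u y * transl x f y\<bar> / b"
        using b by (rule divide_strict_right_mono)
      moreover have "t = (u x / real (Suc n)) / b" by (simp add: t_def)
      ultimately have "t < \<bar>u y * transl x f y\<bar> / b" by simp
      then show "y \<in> {y. \<bar>u y * transl x f y\<bar> / b > t}" by simp
    qed
    have "1 < ennreal (\<Phi> t) * m" using big tT by blast
    also have "m = leb_outer ((+) x ` Bn n)" by (simp add: m_def leb_outer_transl)
    also have "ennreal (\<Phi> t) * leb_outer ((+) x ` Bn n)
        \<le> ennreal (\<Phi> t) * leb_outer {y. \<bar>u y * transl x f y\<bar> / b > t}"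
      by (rule mult_left_mono[OF leb_outer_mono[OF sub]]) simp
    also have "\<dots> \<le> 1" using adm tpos by (simp add: wOrlicz_admissible_def)
    finally show False by simp
  qed
  define C where "C = max (real (Suc n) * T) (wOrlicz_norm \<Phi> u f)"
  have Cpos: "C > 0" using T(1) by (simp add: C_def less_max_iff_disj)
  have "u x / C \<le> wOrlicz_norm \<Phi> u (transl x f) \<and>
        wOrlicz_norm \<Phi> u (transl x f) \<le> C * u x" for x
  proof
    have p1: "transl x f \<in> wOrlicz_space \<Phi> u" "wOrlicz_norm \<Phi> u (transl x f) \<le> u x * wOrlicz_norm \<Phi> u f"
      using part1[OF u f] by auto
    have ne: "{b. wOrlicz_admissible \<Phi> u (transl x f) b} \<noteq> {}"
      using p1(1) by (auto simp: wOrlicz_space_def)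
    have "u x / C \<le> u x / (real (Suc n) * T)"
      using upos[of x] T(1) Cpos by (intro divide_left_mono) (auto simp: C_def)
    also have "\<dots> \<le> wOrlicz_norm \<Phi> u (transl x f)"
      unfolding wOrlicz_norm_def[of _ _ "transl x f"]
      by (rule cInf_greatest[OF ne]) (use lower in auto)
    finally show "u x / C \<le> wOrlicz_norm \<Phi> u (transl x f)" .
    have "u x * wOrlicz_norm \<Phi> u f \<le> u x * C"
      using upos[of x] by (intro mult_left_mono) (auto simp: C_def)
    then show "wOrlicz_norm \<Phi> u (transl x f) \<le> C * u x" using p1(2) by (simp add: mult.commute)
  qed
  then show ?thesis using Cpos by blast
qed

theorem lemma2p5:
  fixes u :: "'a::euclidean_space \<Rightarrow> real" and \<Phi> :: "real \<Rightarrow> real"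
  assumes "u \<in> submult_weights"
    and "young_function \<Phi>" and "continuous_on {0..} \<Phi>" and "delta2 \<Phi>"
  shows "(\<forall>f \<in> wOrlicz_space \<Phi> u. \<forall>x.
            transl x f \<in> wOrlicz_space \<Phi> u \<and>
            wOrlicz_norm \<Phi> u (transl x f) \<le> u x * wOrlicz_norm \<Phi> u f)
       \<and> (\<forall>f \<in> wOrlicz_space \<Phi> u. \<not> (AE x in lebesgue. f x = 0) \<longrightarrow>
            (\<exists>C>0. \<forall>x. u x / C \<le> wOrlicz_norm \<Phi> u (transl x f) \<and>
                        wOrlicz_norm \<Phi> u (transl x f) \<le> C * u x))"
  using part1[OF assms(1)] part2[OF assms(1,2)] by blast

end
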